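(* Let $H=(S_0,e_0,S_1,\dots)$ be a history sequence of the Simpler Lazy Set algorithm, let $S_i$ be a state of $H$, and let $a\neq b$ be active addresses of $S_i$ such that there is a path $Q$ from $a$ to $b$ in $S_i$ but there is no path from $a$ to $b$ in $S_{i+1}$. Let $b^-$ be the address on $Q$ preceding $b$ (so $\mathrm{Next}^{S_i}(b^-)=b$). Then (1) $b^-$ and $b$ are on the main branch of $S_i$, and (2) $(S_i,e_i,S_{i+1})$ is an $\mathrm{RM}$ step that removes $b$ from the main branch by setting $\mathrm{Next}^{S_{i+1}}(b^-)=\mathrm{Next}^{S_i}(b)$.
   Context: Simpler Lazy Set algorithm. Fix a countably infinite set $A$ of addresses with distinguished $\mathsf H,\mathsf T$; $\mathrm{Number}=\mathbb N\cup\{-1,\infty\}$. A state $S$: set $\mathrm{Active}^S\subseteq A$, $\mathrm{Next}^S:\mathrm{Active}^S\setminus\{\mathsf T\}\to A$, $\mathrm{Val}^S:\mathrm{Active}^S\to\mathrm{Number}$, and for each process $p$: $PC_p\in\{0,1,2,3.1,\dots,3.5\}$, $x_p\in\mathbb N$, $\mathrm{curr}_p\in A$, $\mathrm{status}_p$. $S$ is normal if $\mathrm{Active}^S$ is finite, $\mathsf H,\mathsf T$ are active with values $-1,\infty$, other active addresses have values in $\mathbb N$, and for active $a\neq\mathsf T$, $\mathrm{Next}(a)$ is active with $\mathrm{Val}(a)<\mathrm{Val}(\mathrm{Next}(a))$. A path is a sequence $a_1,\dots,a_m$ ($m>1$) of active addresses with $\mathrm{Next}(a_i)=a_{i+1}$;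 the main branch is the path from $\mathsf H$ to $\mathsf T$. Initial state: $\mathrm{Active}=\{\mathsf H,\mathsf T\}$, $\mathrm{Next}(\mathsf H)=\mathsf T$, all $PC_p=0$. Steps $(S,e,T)$ of a process $p$ on a normal $S$: (i) invocation: $PC_p$ from $0$ to $1$, $2$ or $3.1$, with $x_p\in\mathbb N$ arbitrary; (ii) failure: $PC_p$ from $1$ or $2$ to $0$ with $\chi(e)=f$, nothing else changes; (iii) $\mathrm{AD}(x)$ ($x=x_p$, $PC_p$ from $1$ to $0$): with $\mathfrak p$ the main-branch address having $\mathrm{Val}(\mathfrak p)<x\le\mathrm{Val}(\mathrm{Next}(\mathfrak p))$: if $\mathrm{Val}(\mathrm{Next}(\mathfrak p))=x$, no other change, $\chi(e)=1$; else a new address $a\notin\mathrm{Active}^S$ is made active with $\mathrm{Val}(a)=x$, $\mathrm{Next}^T(\mathfrak p)=a$, $\mathrm{Next}^T(a)=\mathrm{Next}^S(\mathfrak p)$, $\chi(e)=0$; (iv) $\mathrm{RM}(x)$ ($PC_p$ from $2$ to $0$): if the main branch has an address $cu$ of value $x$, with $pred$ its main-branch predecessor, set $\mathrm{Next}^T(pred)=\mathrm{Next}^S(cu)$, $\chi(e)=1$ ($e$ removes $cu$ from the main branch); else no change, $\chi(e)=0$; (v) CONTAINS$(x)$ lines, each an atomic step changing only $\mathrm{curr}_p,PC_p,\mathrm{status}_p$: 3.1 $\mathrm{curr}_p:=\mathsf H$; 3.2/3.3 $\mathrm{curr}_p:=\mathrm{Next}(\mathrm{curr}_p)$; 3.4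 if $\mathrm{Val}(\mathrm{curr}_p)\ge x$ go to 3.5 else to 3.3; 3.5 return $1$ if $\mathrm{Val}(\mathrm{curr}_p)=x$ else $0$, $PC_p:=0$. A history sequence is $(S_0,e_0,S_1,\dots)$ with $S_0$ the initial state and each $(S_i,e_i,S_{i+1})$ a step of some process. *)

theory Defs
  imports Main "HOL-Library.Countable"
begin

datatype number = NegOne | Fin nat | Infty

fun num_less :: "number \<Rightarrow> number \<Rightarrow> bool" where
  "num_less NegOne y = (y \<noteq> NegOne)"
| "num_less (Fin m) NegOne = False"
| "num_less (Fin m) (Fin n) = (m < n)"
| "num_less (Fin m) Infty = True"
| "num_less Infty y = False"

definition num_le :: "number \<Rightarrow> number \<Rightarrow> bool" where
  "num_le x y \<longleftrightarrow> x = y \<or> num_less x y"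

datatype pcv = L0 | L1 | L2 | L31 | L32 | L33 | L34 | L35

text \<open>A state. Next and Val are total functions whose values matter only on
  Active - {T} resp. Active.\<close>
record ('a, 'p) state =
  active :: "'a set"
  nxt    :: "'a \<Rightarrow> 'a"
  val    :: "'a \<Rightarrow> number"
  pc     :: "'p \<Rightarrow> pcv"
  xp     :: "'p \<Rightarrow> nat"
  curr   :: "'p \<Rightarrow> 'a"
  status :: "'p \<Rightarrow> nat"

datatype ekind = KInv | KFail | KAD | KRM | KCont
datatype chi = ChiNone | ChiF | Chi0 | Chi1
datatype 'p event = Event (ev_proc: 'p) (ev_kind: ekind) (ev_chi: chi)

definition normal :: "'a \<Rightarrow> 'a \<Rightarrow> ('a,'p) state \<Rightarrow> bool" where
  "normal H T S \<longleftrightarrow>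
     finite (active S) \<and> H \<in> active S \<and> T \<in> active S \<and>
     val S H = NegOne \<and> val S T = Infty \<and>
     (\<forall>a\<in>active S - {H, T}. \<exists>n. val S a = Fin n) \<and>
     (\<forall>a\<in>active S - {T}. nxt S a \<in> active S \<and> num_less (val S a) (val S (nxt S a)))"

definition is_path :: "'a \<Rightarrow> ('a,'p) state \<Rightarrow> 'a list \<Rightarrow> bool" where
  "is_path T S xs \<longleftrightarrow> length xs > 1 \<and> set xs \<subseteq> active S \<and>
     (\<forall>k < length xs - 1. xs ! k \<noteq> T \<and> nxt S (xs ! k) = xs ! Suc k)"

definition main_branch :: "'a \<Rightarrow> 'a \<Rightarrow> ('a,'p) state \<Rightarrow> 'a list \<Rightarrow> bool" where
  "main_branch H T S xs \<longleftrightarrow> is_path T S xs \<and> hd xs = H \<and> last xs = T"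

definition on_main :: "'a \<Rightarrow> 'a \<Rightarrow> ('a,'p) state \<Rightarrow> 'a \<Rightarrow> bool" where
  "on_main H T S a \<longleftrightarrow> (\<exists>xs. main_branch H T S xs \<and> a \<in> set xs)"

definition main_pred :: "'a \<Rightarrow> 'a \<Rightarrow> ('a,'p) state \<Rightarrow> 'a \<Rightarrow> 'a \<Rightarrow> bool" where
  "main_pred H T S pred cu \<longleftrightarrow>
     (\<exists>xs k. main_branch H T S xs \<and> Suc k < length xs \<and> xs ! k = pred \<and> xs ! Suc k = cu)"

definition mem_same :: "'a \<Rightarrow> ('a,'p) state \<Rightarrow> ('a,'p) state \<Rightarrow> bool" where
  "mem_same T S S' \<longleftrightarrow> active S' = active S \<and>
     (\<forall>a\<in>active S - {T}. nxt S' a = nxt S a) \<and> (\<forall>a\<in>active S. val S' a = val S a)"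

definition others_same :: "'p \<Rightarrow> ('a,'p) state \<Rightarrow> ('a,'p) state \<Rightarrow> bool" where
  "others_same p S S' \<longleftrightarrow> (\<forall>q. q \<noteq> p \<longrightarrow>
     pc S' q = pc S q \<and> xp S' q = xp S q \<and> curr S' q = curr S q \<and> status S' q = status S q)"

definition invoc_step :: "'a \<Rightarrow> 'p \<Rightarrow> ('a,'p) state \<Rightarrow> ('a,'p) state \<Rightarrow> bool" where
  "invoc_step T p S S' \<longleftrightarrow> pc S p = L0 \<and> pc S' p \<in> {L1, L2, L31} \<and>
     mem_same T S S' \<and> others_same p S S' \<and> curr S' p = curr S p \<and> status S' p = status S p"

definition fail_step :: "'a \<Rightarrow> 'p \<Rightarrow> ('a,'p) state \<Rightarrow> ('a,'p) state \<Rightarrow> bool" where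
  "fail_step T p S S' \<longleftrightarrow> pc S p \<in> {L1, L2} \<and> pc S' p = L0 \<and>
     mem_same T S S' \<and> others_same p S S' \<and>
     xp S' p = xp S p \<and> curr S' p = curr S p \<and> status S' p = status S p"

definition p_done :: "'p \<Rightarrow> ('a,'p) state \<Rightarrow> ('a,'p) state \<Rightarrow> bool" where
  "p_done p S S' \<longleftrightarrow> pc S' p = L0 \<and> xp S' p = xp S p \<and> curr S' p = curr S p \<and>
     status S' p = status S p \<and> others_same p S S'"

definition ad_step :: "'a \<Rightarrow> 'a \<Rightarrow> 'p \<Rightarrow> ('a,'p) state \<Rightarrow> chi \<Rightarrow> ('a,'p) state \<Rightarrow> bool" where
  "ad_step H T p S c S' \<longleftrightarrow> pc S p = L1 \<and> p_done p S S' \<and>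
     (\<exists>pp. on_main H T S pp \<and> pp \<noteq> T \<and>
        num_less (val S pp) (Fin (xp S p)) \<and> num_le (Fin (xp S p)) (val S (nxt S pp)) \<and>
        (if val S (nxt S pp) = Fin (xp S p) then c = Chi1 \<and> mem_same T S S'
         else c = Chi0 \<and> (\<exists>a. a \<notin> active S \<and>
            active S' = insert a (active S) \<and> val S' a = Fin (xp S p) \<and>
            nxt S' pp = a \<and> nxt S' a = nxt S pp \<and>
            (\<forall>b\<in>active S - {T, pp}. nxt S' b = nxt S b) \<and>
            (\<forall>b\<in>active S. val S' b = val S b))))"

definition rm_removes :: "'a \<Rightarrow> 'a \<Rightarrow> 'p \<Rightarrow> ('a,'p) state \<Rightarrow> ('a,'p) state \<Rightarrow> 'a \<Rightarrow> 'a \<Rightarrow> bool" where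
  "rm_removes H T p S S' cu pred \<longleftrightarrow> pc S p = L2 \<and> p_done p S S' \<and>
     on_main H T S cu \<and> val S cu = Fin (xp S p) \<and> main_pred H T S pred cu \<and>
     active S' = active S \<and> nxt S' pred = nxt S cu \<and>
     (\<forall>b\<in>active S - {T, pred}. nxt S' b = nxt S b) \<and>
     (\<forall>b\<in>active S. val S' b = val S b)"

definition rm_step :: "'a \<Rightarrow> 'a \<Rightarrow> 'p \<Rightarrow> ('a,'p) state \<Rightarrow> chi \<Rightarrow> ('a,'p) state \<Rightarrow> bool" where
  "rm_step H T p S c S' \<longleftrightarrow>
     (c = Chi1 \<and> (\<exists>cu pred. rm_removes H T p S S' cu pred)) \<or>
     (c = Chi0 \<and> pc S p = L2 \<and> p_done p S S' \<and> mem_same T S S' \<and>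
        \<not> (\<exists>cu. on_main H T S cu \<and> val S cu = Fin (xp S p)))"

text \<open>CONTAINS(x) lines 3.1 - 3.5; only curr_p, PC_p, status_p may change.
  Reading: lines 3.2 and 3.3 continue with the test at line 3.4.\<close>
definition cont_step :: "'a \<Rightarrow> 'a \<Rightarrow> 'p \<Rightarrow> ('a,'p) state \<Rightarrow> chi \<Rightarrow> ('a,'p) state \<Rightarrow> bool" where
  "cont_step H T p S c S' \<longleftrightarrow> mem_same T S S' \<and> others_same p S S' \<and> xp S' p = xp S p \<and>
    (  (pc S p = L31 \<and> curr S' p = H \<and> pc S' p = L32 \<and> status S' p = status S p \<and> c = ChiNone)
     \<or> (pc S p \<in> {L32, L33} \<and> curr S' p = nxt S (curr S p) \<and> pc S' p = L34
          \<and> status S' p = status S p \<and> c = ChiNone)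
     \<or> (pc S p = L34 \<and> curr S' p = curr S p \<and> status S' p = status S p \<and> c = ChiNone \<and>
          pc S' p = (if num_le (Fin (xp S p)) (val S (curr S p)) then L35 else L33))
     \<or> (pc S p = L35 \<and> curr S' p = curr S p \<and> pc S' p = L0 \<and>
          (if val S (curr S p) = Fin (xp S p) then status S' p = 1 \<and> c = Chi1
           else status S' p = 0 \<and> c = Chi0)))"

definition step :: "'a \<Rightarrow> 'a \<Rightarrow> ('a,'p) state \<Rightarrow> 'p event \<Rightarrow> ('a,'p) state \<Rightarrow> bool" where
  "step H T S e S' \<longleftrightarrow> normal H T S \<and>
    (case e of Event p k c \<Rightarrow>
       (k = KInv \<and> c = ChiNone \<and> invoc_step T p S S')
     \<or> (k = KFail \<and> c = ChiF \<and> fail_step T p S S')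
     \<or> (k = KAD \<and> ad_step H T p S c S')
     \<or> (k = KRM \<and> rm_step H T p S c S')
     \<or> (k = KCont \<and> cont_step H T p S c S'))"

definition initial :: "'a \<Rightarrow> 'a \<Rightarrow> ('a,'p) state \<Rightarrow> bool" where
  "initial H T S \<longleftrightarrow> active S = {H, T} \<and> nxt S H = T \<and>
     val S H = NegOne \<and> val S T = Infty \<and> (\<forall>p. pc S p = L0)"

definition history_prefix :: "'a \<Rightarrow> 'a \<Rightarrow> (nat \<Rightarrow> ('a,'p) state) \<Rightarrow> (nat \<Rightarrow> 'p event) \<Rightarrow> nat \<Rightarrow> bool" where
  "history_prefix H T S e n \<longleftrightarrow> initial H T (S 0) \<and> (\<forall>j<n. step H T (S j) (e j) (S (Suc j)))"

end

theory Submission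
  imports Defs
begin

definition edges :: "'a \<Rightarrow> ('a,'p) state \<Rightarrow> ('a \<times> 'a) set" where
  "edges T S = {(x, y). x \<in> active S \<and> x \<noteq> T \<and> y \<in> active S \<and> nxt S x = y}"

lemma path_Cons:
  "is_path T S (x # xs) \<longleftrightarrow> xs \<noteq> [] \<and> x \<in> active S \<and> x \<noteq> T \<and> nxt S x = hd xs \<and>
     (length xs = 1 \<and> set xs \<subseteq> active S \<or> is_path T S xs)"
proof
  assume h: "is_path T S (x # xs)"
  then have ne: "xs \<noteq> []" unfolding is_path_def by auto
  have "x \<in> active S \<and> x \<noteq> T \<and> nxt S x = hd xs"
    using h ne unfolding is_path_def by (auto simp: hd_conv_nth)
  moreover have "length xs = 1 \<and> set xs \<subseteq> active S \<or> is_path T S xs"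
  proof (cases "length xs = 1")
    case True then show ?thesis using h unfolding is_path_def by auto
  next
    case False
    with ne have "length xs > 1" by (cases xs) auto
    moreover have "\<forall>k < length xs - 1. xs ! k \<noteq> T \<and> nxt S (xs ! k) = xs ! Suc k"
    proof (intro allI impI)
      fix k assume "k < length xs - 1"
      then have "Suc k < length (x#xs) - 1" by auto
      then show "xs ! k \<noteq> T \<and> nxt S (xs ! k) = xs ! Suc k"
        using h unfolding is_path_def by (metis nth_Cons_Suc)
    qed
    ultimately show ?thesis using h unfolding is_path_def by auto
  qed
  ultimately show "xs \<noteq> [] \<and> x \<in> active S \<and> x \<noteq> T \<and> nxt S x = hd xs \<and>
     (length xs = 1 \<and> set xs \<subseteq> active S \<or> is_path T S xs)" using ne by blast
next
  assume h: "xs \<noteq> [] \<and> x \<in> active S \<and> x \<noteq> T \<and> nxt S x = hd xs \<and>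
     (length xs = 1 \<and> set xs \<subseteq> active S \<or> is_path T S xs)"
  have "\<forall>k < length (x#xs) - 1. (x#xs) ! k \<noteq> T \<and> nxt S ((x#xs) ! k) = (x#xs) ! Suc k"
  proof (intro allI impI)
    fix k assume k: "k < length (x#xs) - 1"
    show "(x#xs) ! k \<noteq> T \<and> nxt S ((x#xs) ! k) = (x#xs) ! Suc k"
    proof (cases k)
      case 0 then show ?thesis using h by (auto simp: hd_conv_nth)
    next
      case (Suc j)
      then have "j < length xs - 1" using k by auto
      then have "is_path T S xs" using h by auto
      then show ?thesis using Suc \<open>j < length xs - 1\<close> unfolding is_path_def by auto
    qed
  qed
  moreover have "set xs \<subseteq> active S" using h unfolding is_path_def by auto
  ultimately show "is_path T S (x # xs)" using h unfolding is_path_def by (cases xs) auto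
qed

lemma path_trancl_aux:
  "is_path T S Q \<Longrightarrow> (hd Q, Q ! (length Q - 2)) \<in> (edges T S)\<^sup>* \<and>
     (Q ! (length Q - 2), last Q) \<in> edges T S"
proof (induction Q)
  case Nil then show ?case unfolding is_path_def by auto
next
  case (Cons x xs)
  from Cons.prems have pc: "xs \<noteq> [] \<and> x \<in> active S \<and> x \<noteq> T \<and> nxt S x = hd xs \<and>
     (length xs = 1 \<and> set xs \<subseteq> active S \<or> is_path T S xs)" using path_Cons[of T S x xs] by blast
  show ?case
  proof (cases "length xs = 1")
    case True
    then obtain y where xs: "xs = [y]" by (cases xs) auto
    then show ?thesis using pc Cons.prems unfolding edges_def is_path_def by auto
  next
    case False
    with pc have p: "is_path T S xs" by auto
    have l2: "length xs \<ge> 2" using p unfolding is_path_def by auto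
    have e: "(x, hd xs) \<in> edges T S" using pc p unfolding edges_def is_path_def
      by (auto simp: hd_conv_nth)
    have idx: "(x#xs) ! (length (x#xs) - 2) = xs ! (length xs - 2)"
    proof -
      have "length (x#xs) - 2 = Suc (length xs - 2)" using l2 by simp
      then show ?thesis by (simp only: nth_Cons_Suc)
    qed
    have "last (x#xs) = last xs" using pc by auto
    then show ?thesis using Cons.IH[OF p] e idx
      by (auto intro: converse_rtrancl_into_rtrancl)
  qed
qed

lemma path_trancl: "is_path T S Q \<Longrightarrow> (hd Q, last Q) \<in> (edges T S)\<^sup>+"
  using path_trancl_aux[of T S Q] by (meson rtrancl_into_trancl1)

lemma trancl_path:
  assumes "(x, y) \<in> (edges T S)\<^sup>+"
  shows "\<exists>Q. is_path T S Q \<and> hd Q = x \<and> last Q = y"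
  using assms
proof (induction rule: converse_trancl_induct)
  case (base x)
  then show ?case unfolding edges_def is_path_def
    by (intro exI[of _ "[x, y]"]) (auto simp: nth_Cons split: nat.split)
next
  case (step x z)
  then obtain Q where Q: "is_path T S Q" "hd Q = z" "last Q = y" by blast
  have "Q \<noteq> []" using Q unfolding is_path_def by auto
  then have "is_path T S (x # Q)" using Q step.hyps(1)
    by (subst path_Cons) (auto simp: edges_def)
  then show ?case using Q \<open>Q \<noteq> []\<close> by (intro exI[of _ "x # Q"]) auto
qed

lemma mem_same_edges: "mem_same T S S' \<Longrightarrow> edges T S \<subseteq> edges T S'"
  unfolding mem_same_def edges_def by auto

lemma subset_trancl_trancl:
  assumes "r \<subseteq> s\<^sup>+" and "(x, y) \<in> r\<^sup>+" shows "(x, y) \<in> s\<^sup>+"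
  using assms(2)
proof (induction rule: trancl_induct)
  case (base y) then show ?case using assms(1) by auto
next
  case (step y z) then show ?case using assms(1) by (meson subsetD trancl_trans)
qed

lemma on_main_active: "on_main H T S x \<Longrightarrow> x \<in> active S"
  unfolding on_main_def main_branch_def is_path_def by auto

lemma ad_edges:
  assumes n: "normal H T S" and ad: "ad_step H T p S c S'"
  shows "edges T S \<subseteq> (edges T S')\<^sup>+"
proof -
  from ad obtain pp where pp: "on_main H T S pp" "pp \<noteq> T" and
    br: "(if val S (nxt S pp) = Fin (xp S p) then c = Chi1 \<and> mem_same T S S'
         else c = Chi0 \<and> (\<exists>a. a \<notin> active S \<and>
            active S' = insert a (active S) \<and> val S' a = Fin (xp S p) \<and>
            nxt S' pp = a \<and> nxt S' a = nxt S pp \<and>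
            (\<forall>b\<in>active S - {T, pp}. nxt S' b = nxt S b) \<and>
            (\<forall>b\<in>active S. val S' b = val S b)))"
    unfolding ad_step_def by blast
  show ?thesis
  proof (cases "val S (nxt S pp) = Fin (xp S p)")
    case True
    then have "mem_same T S S'" using br by simp
    then show ?thesis using mem_same_edges[of T S S'] by auto
  next
    case False
    then obtain a where a: "a \<notin> active S" "active S' = insert a (active S)"
      "nxt S' pp = a" "nxt S' a = nxt S pp" "\<forall>b\<in>active S - {T, pp}. nxt S' b = nxt S b"
      using br by auto
    have T: "T \<in> active S" using n unfolding normal_def by auto
    show ?thesis
    proof
      fix z assume z: "z \<in> edges T S"
      then obtain x y where xy: "z = (x, y)" "x \<in> active S" "x \<noteq> T" "y \<in> active S" "nxt S x = y"
        unfolding edges_def by auto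
      show "z \<in> (edges T S')\<^sup>+"
      proof (cases "x = pp")
        case True
        have "(pp, a) \<in> edges T S'" using a pp on_main_active[OF pp(1)] unfolding edges_def by auto
        moreover have "(a, y) \<in> edges T S'" using a T xy True unfolding edges_def by auto
        ultimately show ?thesis using xy True by auto
      next
        case False
        then have "(x, y) \<in> edges T S'" using a xy unfolding edges_def by auto
        then show ?thesis using xy by auto
      qed
    qed
  qed
qed

lemma num_less_irrefl: "\<not> num_less v v"
  by (cases v) auto

lemma rm_facts:
  assumes n: "normal H T S" and rm: "rm_removes H T p S S' cu pred"
  shows "pred \<in> active S" "pred \<noteq> T" "nxt S pred = cu" "cu \<in> active S" "cu \<noteq> T"
    "active S' = active S" "nxt S' pred = nxt S cu" "nxt S cu \<in> active S"
    "\<forall>x\<in>active S - {T, pred}. nxt S' x = nxt S x" "on_main H T S pred"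
proof -
  from rm obtain xs k where xs: "main_branch H T S xs" "Suc k < length xs" "xs ! k = pred"
    "xs ! Suc k = cu" unfolding rm_removes_def main_pred_def by blast
  have p: "is_path T S xs" using xs unfolding main_branch_def by auto
  show "pred \<in> active S" using p xs unfolding is_path_def
    by (metis Suc_lessD nth_mem subsetD)
  have kk: "k < length xs - 1" using xs(2) by simp
  have "xs ! k \<noteq> T \<and> nxt S (xs ! k) = xs ! Suc k"
    using p kk unfolding is_path_def by blast
  then show "pred \<noteq> T" "nxt S pred = cu" using xs by auto
  have "on_main H T S cu" using rm unfolding rm_removes_def by blast
  then show "cu \<in> active S" by (rule on_main_active)
  have v1: "val S cu = Fin (xp S p)" using rm unfolding rm_removes_def by blast
  have v2: "val S T = Infty" using n unfolding normal_def by blast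
  show cT: "cu \<noteq> T" using v1 v2 by auto
  show "active S' = active S" "nxt S' pred = nxt S cu"
    "\<forall>x\<in>active S - {T, pred}. nxt S' x = nxt S x"
    using rm unfolding rm_removes_def by blast+
  have "\<forall>a\<in>active S - {T}. nxt S a \<in> active S" using n unfolding normal_def by blast
  then show "nxt S cu \<in> active S" using cT \<open>cu \<in> active S\<close> by blast
  show "on_main H T S pred" unfolding on_main_def using xs
    by (metis Suc_lessD nth_mem)
qed

lemma rm_key:
  assumes n: "normal H T S" and rm: "rm_removes H T p S S' cu pred"
    and h: "(x, b) \<in> (edges T S)\<^sup>+" and bc: "b \<noteq> cu"
  shows "(x, b) \<in> (edges T S')\<^sup>+ \<and> (x = cu \<longrightarrow> (nxt S cu, b) \<in> (edges T S')\<^sup>*)"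
proof -
  note f = rm_facts[OF n rm]
  have pres: "(u, v) \<in> edges T S'" if "(u, v) \<in> edges T S" "u \<noteq> pred" for u v
    using that f unfolding edges_def by auto
  have pe: "(pred, nxt S cu) \<in> edges T S'" using f unfolding edges_def by auto
  from h show ?thesis
  proof (induction rule: converse_trancl_induct)
    case (base y)
    have yb: "y \<noteq> pred" using base f bc unfolding edges_def by auto
    have "(y, b) \<in> edges T S'" using pres[OF base yb] .
    moreover have "y = cu \<longrightarrow> b = nxt S cu" using base unfolding edges_def by auto
    ultimately show ?case by auto
  next
    case (step y z)
    show ?case
    proof (cases "y = pred")
      case True
      then have "z = cu" using step.hyps(1) f unfolding edges_def by auto
      then have "(nxt S cu, b) \<in> (edges T S')\<^sup>*" using step.IH by auto
      then have "(pred, b) \<in> (edges T S')\<^sup>+" using pe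
        by (meson rtrancl_into_trancl2)
      moreover have "y \<noteq> cu"
      proof
        assume "y = cu"
        have "num_less (val S pred) (val S (nxt S pred))" using n f unfolding normal_def by blast
        then show False using f True \<open>y = cu\<close> num_less_irrefl by simp
      qed
      ultimately show ?thesis using True by auto
    next
      case False
      then have "(y, z) \<in> edges T S'" using pres step.hyps(1) by auto
      moreover have "y = cu \<longrightarrow> z = nxt S cu" using step.hyps(1) unfolding edges_def by auto
      ultimately show ?thesis using step.IH by auto
    qed
  qed
qed

theorem lemma4p10:
  fixes H T :: "'a::countable" and S :: "nat \<Rightarrow> ('a, 'p) state" and e :: "nat \<Rightarrow> 'p event"
    and i :: nat and a b :: 'a and Q :: "'a list"
  assumes "infinite (UNIV :: 'a set)" and "H \<noteq> T"
    and "history_prefix H T S e (Suc i)"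
    and "a \<in> active (S i)" and "b \<in> active (S i)" and "a \<noteq> b"
    and "is_path T (S i) Q" and "hd Q = a" and "last Q = b"
    and "\<not> (\<exists>Q'. is_path T (S (Suc i)) Q' \<and> hd Q' = a \<and> last Q' = b)"
  shows "on_main H T (S i) (Q ! (length Q - 2)) \<and> on_main H T (S i) b \<and>
         (\<exists>p. e i = Event p KRM Chi1 \<and>
              rm_removes H T p (S i) (S (Suc i)) b (Q ! (length Q - 2)) \<and>
              nxt (S (Suc i)) (Q ! (length Q - 2)) = nxt (S i) b)"
proof -
  have st: "step H T (S i) (e i) (S (Suc i))" using assms(3) unfolding history_prefix_def by auto
  then have n: "normal H T (S i)" unfolding step_def by auto
  have hQ: "(a, b) \<in> (edges T (S i))\<^sup>+" using path_trancl[OF assms(7)] assms(8,9) by simp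
  have nS: "(a, b) \<notin> (edges T (S (Suc i)))\<^sup>+"
  proof
    assume "(a, b) \<in> (edges T (S (Suc i)))\<^sup>+"
    from trancl_path[OF this] assms(10) show False by blast
  qed
  have ms: False if "mem_same T (S i) (S (Suc i))"
    using trancl_mono[OF hQ mem_same_edges[OF that]] nS by simp
  obtain p k c where ev: "e i = Event p k c" by (cases "e i")
  have aQ: "(a, Q ! (length Q - 2)) \<in> (edges T (S i))\<^sup>*"
    and lQ: "(Q ! (length Q - 2), b) \<in> edges T (S i)"
    using path_trancl_aux[OF assms(7)] assms(8,9) by auto
  have dis: "(k = KInv \<and> c = ChiNone \<and> invoc_step T p (S i) (S (Suc i)))
     \<or> (k = KFail \<and> c = ChiF \<and> fail_step T p (S i) (S (Suc i)))
     \<or> (k = KAD \<and> ad_step H T p (S i) c (S (Suc i)))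
     \<or> (k = KRM \<and> rm_step H T p (S i) c (S (Suc i)))
     \<or> (k = KCont \<and> cont_step H T p (S i) c (S (Suc i)))"
    using st unfolding step_def ev by simp
  have nad: "\<not> ad_step H T p (S i) c (S (Suc i))"
  proof
    assume "ad_step H T p (S i) c (S (Suc i))"
    from ad_edges[OF n this] have "edges T (S i) \<subseteq> (edges T (S (Suc i)))\<^sup>+" .
    from subset_trancl_trancl[OF this hQ] nS show False by simp
  qed
  have ninv: "\<not> invoc_step T p (S i) (S (Suc i))"
    using ms unfolding invoc_step_def by blast
  have nfail: "\<not> fail_step T p (S i) (S (Suc i))"
    using ms unfolding fail_step_def by blast
  have ncont: "\<not> cont_step H T p (S i) c (S (Suc i))"
    using ms unfolding cont_step_def by blast
  have "k = KRM \<and> rm_step H T p (S i) c (S (Suc i))"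
    using dis nad ninv nfail ncont by blast
  then have "k = KRM \<and> c = Chi1 \<and> (\<exists>cu pred. rm_removes H T p (S i) (S (Suc i)) cu pred)"
    using ms unfolding rm_step_def by blast
  then obtain cu pred where k: "k = KRM" "c = Chi1" and rm: "rm_removes H T p (S i) (S (Suc i)) cu pred"
    by blast
  note f = rm_facts[OF n rm]
  have bcu: "b = cu"
    using rm_key[OF n rm hQ] nS by blast
  have cp: "Q ! (length Q - 2) = pred"
  proof (rule ccontr)
    assume ne: "Q ! (length Q - 2) \<noteq> pred"
    define c0 where "c0 = Q ! (length Q - 2)"
    have e1: "(c0, b) \<in> edges T (S (Suc i))" using lQ ne f unfolding c0_def edges_def by auto
    have "c0 \<noteq> cu"
    proof
      assume "c0 = cu"
      have c0a: "c0 \<in> active (S i) - {T}" and nc: "nxt (S i) c0 = b"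
        using lQ unfolding c0_def edges_def by auto
      have "\<forall>a\<in>active (S i) - {T}. num_less (val (S i) a) (val (S i) (nxt (S i) a))"
        using n unfolding normal_def by blast
      then have "num_less (val (S i) c0) (val (S i) b)" using c0a nc by blast
      then show False using \<open>c0 = cu\<close> bcu num_less_irrefl by simp
    qed
    have "(a, c0) \<in> (edges T (S (Suc i)))\<^sup>*"
    proof (cases "a = c0")
      case True then show ?thesis by simp
    next
      case False
      then have "(a, c0) \<in> (edges T (S i))\<^sup>+" using aQ unfolding c0_def
        by (metis rtranclD)
      from conjunct1[OF rm_key[OF n rm this \<open>c0 \<noteq> cu\<close>]]
      show ?thesis by (rule trancl_into_rtrancl)
    qed
    then have "(a, b) \<in> (edges T (S (Suc i)))\<^sup>+" using e1 by auto
    then show False using nS by simp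
  qed
  have "on_main H T (S i) b" using rm bcu unfolding rm_removes_def by auto
  then show ?thesis using f cp bcu rm ev k by auto
qed

end
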